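(* For a restless bandit as in the context, every stationary policy $u$, every $S\subseteq N^{\{0,1\}}$ and every $i\in N$, $$v^S_i+\sum_{j\in S}c^S_j\,x^{0,u}_{ij}=v^u_i+\sum_{j\in N^{\{0,1\}}\setminus S}c^S_j\,x^{1,u}_{ij}.$$
   Context: Restless bandit: finite state space $N=N^{\{0,1\}}\cup N^{\{1\}}$ (disjoint); actions $a\in\{0,1\}$; one-period costs $h^a_i$; transition probabilities $p^a_{ij}$, with $p^1_{ij}=p^0_{ij}$ and $h^1_i=h^0_i$ for $i\in N^{\{1\}}$ (no effective choice there); discount factor $\beta\in(0,1)$. Stationary policies $u:N\to[0,1]$ (probability of active action) with $u(i)=1$ on $N^{\{1\}}$. $v^u_i=E^u_i[\sum_{t\ge0}h^{a(t)}_{X(t)}\beta^t]$, $x^{a,u}_{ij}=E^u_i[\sum_{t\ge0}1\{X(t)=j,a(t)=a\}\beta^t]$. For $S\subseteq N^{\{0,1\}}$ the $S$-active policy is active on $S\cup N^{\{1\}}$ and passive elsewhere; $v^S_i$ its cost measure. Marginal costs: $c^S_i=h^0_i-h^1_i+\beta\sum_{j\in N}(p^0_{ij}-p^1_{ij})v^S_j$. *)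

theory Defs
  imports Complex_Main
begin

text \<open>Restless bandit on a finite state type 's (state space N = UNIV).
  Actions are encoded as naturals 0 (passive) and 1 (active).
  A stationary policy u gives at each state the probability of the active action.\<close>

definition policy_trans :: "('s \<Rightarrow> 's \<Rightarrow> real) \<Rightarrow> ('s \<Rightarrow> 's \<Rightarrow> real) \<Rightarrow> ('s \<Rightarrow> real) \<Rightarrow> 's \<Rightarrow> 's \<Rightarrow> real" where
  "policy_trans p0 p1 u i j = u i * p1 i j + (1 - u i) * p0 i j"

fun nstep :: "('s::finite \<Rightarrow> 's \<Rightarrow> real) \<Rightarrow> nat \<Rightarrow> 's \<Rightarrow> 's \<Rightarrow> real" where
  "nstep P 0 i j = (if i = j then 1 else 0)"
| "nstep P (Suc t) i j = (\<Sum>k\<in>UNIV. nstep P t i k * P k j)"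

definition act_prob :: "('s \<Rightarrow> real) \<Rightarrow> nat \<Rightarrow> 's \<Rightarrow> real" where
  "act_prob u a j = (if a = 0 then 1 - u j else u j)"

text \<open>Discounted state-action occupation measure
  x^{a,u}_{ij} = E^u_i [ sum_t 1{X(t)=j, a(t)=a} beta^t ].\<close>
definition occ :: "real \<Rightarrow> ('s::finite \<Rightarrow> 's \<Rightarrow> real) \<Rightarrow> ('s \<Rightarrow> 's \<Rightarrow> real) \<Rightarrow> ('s \<Rightarrow> real) \<Rightarrow> nat \<Rightarrow> 's \<Rightarrow> 's \<Rightarrow> real" where
  "occ \<beta> p0 p1 u a i j = (\<Sum>t. \<beta> ^ t * nstep (policy_trans p0 p1 u) t i j * act_prob u a j)"

text \<open>Discounted cost v^u_i = E^u_i [ sum_t h^{a(t)}_{X(t)} beta^t ].\<close>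
definition cost :: "real \<Rightarrow> ('s::finite \<Rightarrow> 's \<Rightarrow> real) \<Rightarrow> ('s \<Rightarrow> 's \<Rightarrow> real) \<Rightarrow> ('s \<Rightarrow> real) \<Rightarrow> ('s \<Rightarrow> real) \<Rightarrow> ('s \<Rightarrow> real) \<Rightarrow> 's \<Rightarrow> real" where
  "cost \<beta> p0 p1 h0 h1 u i =
     (\<Sum>t. \<beta> ^ t * (\<Sum>j\<in>UNIV. nstep (policy_trans p0 p1 u) t i j *
                          (act_prob u 0 j * h0 j + act_prob u 1 j * h1 j)))"

text \<open>The S-active policy (N1 = states with only the active action).\<close>
definition S_active :: "'s set \<Rightarrow> 's set \<Rightarrow> 's \<Rightarrow> real" where
  "S_active N1 S j = (if j \<in> S \<union> N1 then 1 else 0)"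

definition marg_cost :: "real \<Rightarrow> ('s::finite \<Rightarrow> 's \<Rightarrow> real) \<Rightarrow> ('s \<Rightarrow> 's \<Rightarrow> real) \<Rightarrow> ('s \<Rightarrow> real) \<Rightarrow> ('s \<Rightarrow> real) \<Rightarrow> 's set \<Rightarrow> 's set \<Rightarrow> 's \<Rightarrow> real" where
  "marg_cost \<beta> p0 p1 h0 h1 N1 S i =
     h0 i - h1 i + \<beta> * (\<Sum>j\<in>UNIV. (p0 i j - p1 i j) * cost \<beta> p0 p1 h0 h1 (S_active N1 S) j)"

end

theory Submission
  imports Defs
begin


definition stoch :: "('s::finite \<Rightarrow> 's \<Rightarrow> real) \<Rightarrow> bool" where
  "stoch P \<longleftrightarrow> (\<forall>j k. 0 \<le> P j k) \<and> (\<forall>j. (\<Sum>k\<in>UNIV. P j k) = 1)"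

definition RR :: "real \<Rightarrow> ('s::finite \<Rightarrow> 's \<Rightarrow> real) \<Rightarrow> ('s \<Rightarrow> real) \<Rightarrow> 's \<Rightarrow> real" where
  "RR \<beta> P f i = (\<Sum>t. \<beta> ^ t * (\<Sum>j\<in>UNIV. nstep P t i j * f j))"

lemma nstep_nonneg: "stoch P \<Longrightarrow> 0 \<le> nstep P t i j"
  by (induction t arbitrary: j) (auto simp: stoch_def intro!: sum_nonneg)

lemma nstep_rowsum: "stoch P \<Longrightarrow> (\<Sum>j\<in>UNIV. nstep P t i j) = 1"
proof (induction t)
  case 0
  have "(\<Sum>j\<in>UNIV. nstep P 0 i j) = (\<Sum>j\<in>UNIV. if i = j then 1 else 0)"
    by (rule sum.cong) auto
  also have "\<dots> = 1" by (simp only: sum.delta' finite UNIV_I if_True)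
  finally show ?case .
next
  case (Suc t)
  have "(\<Sum>j\<in>UNIV. nstep P (Suc t) i j) = (\<Sum>j\<in>UNIV. \<Sum>k\<in>UNIV. nstep P t i k * P k j)"
    by simp
  also have "\<dots> = (\<Sum>k\<in>UNIV. \<Sum>j\<in>UNIV. nstep P t i k * P k j)"
    by (rule sum.swap)
  also have "\<dots> = (\<Sum>k\<in>UNIV. nstep P t i k * (\<Sum>j\<in>UNIV. P k j))"
    by (simp add: sum_distrib_left)
  also have "\<dots> = 1" using Suc by (simp add: stoch_def)
  finally show ?case .
qed

lemma nstep_le1: "stoch P \<Longrightarrow> nstep P t i j \<le> 1"
proof -
  assume s: "stoch P"
  have "nstep P t i j \<le> (\<Sum>j\<in>UNIV. nstep P t i j)"
    by (rule member_le_sum) (auto simp: nstep_nonneg[OF s])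
  then show ?thesis using nstep_rowsum[OF s] by simp
qed

lemma md1: "(if a then 1 else 0) * (x::real) = (if a then x else 0)" by simp
lemma md2: "(x::real) * (if a then 1 else 0) = (if a then x else 0)" by simp

lemma nstep_Suc_left: "nstep P (Suc t) i j = (\<Sum>k\<in>UNIV. P i k * nstep P t k j)"
proof (induction t arbitrary: j)
  case 0
  have a: "(\<Sum>k\<in>UNIV. (if i = k then 1 else 0) * P k j) = P i j"
    by (simp only: md1 sum.delta' finite UNIV_I if_True)
  have b: "(\<Sum>k\<in>UNIV. P i k * (if k = j then 1 else 0)) = P i j"
    by (simp only: md2 sum.delta finite UNIV_I if_True)
  show ?case using a b by simp
next
  case (Suc t)
  have "nstep P (Suc (Suc t)) i j = (\<Sum>m\<in>UNIV. (\<Sum>k\<in>UNIV. P i k * nstep P t k m) * P m j)"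
    using Suc by simp
  also have "\<dots> = (\<Sum>k\<in>UNIV. P i k * (\<Sum>m\<in>UNIV. nstep P t k m * P m j))"
    by (simp only: sum_distrib_left sum_distrib_right mult.assoc, rule sum.swap)
  finally show ?case by simp
qed

lemma summable_term:
  assumes s: "stoch P" and b: "0 \<le> \<beta>" "\<beta> < 1"
  shows "summable (\<lambda>t. \<beta> ^ t * (\<Sum>j\<in>UNIV. nstep P t i j * f j))"
proof (rule summable_comparison_test')
  show "summable (\<lambda>t. \<beta> ^ t * (\<Sum>j\<in>UNIV. \<bar>f j\<bar>))"
    by (rule summable_mult2, rule summable_geometric) (use b in simp)
  fix t :: nat
  have "\<bar>\<Sum>j\<in>UNIV. nstep P t i j * f j\<bar> \<le> (\<Sum>j\<in>UNIV. \<bar>nstep P t i j * f j\<bar>)"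
    by (rule sum_abs)
  also have "\<dots> \<le> (\<Sum>j\<in>UNIV. \<bar>f j\<bar>)"
  proof (rule sum_mono)
    fix j
    have "\<bar>nstep P t i j * f j\<bar> = nstep P t i j * \<bar>f j\<bar>"
      using nstep_nonneg[OF s] by (simp add: abs_mult)
    also have "\<dots> \<le> 1 * \<bar>f j\<bar>"
      by (rule mult_right_mono) (auto simp: nstep_le1[OF s])
    finally show "\<bar>nstep P t i j * f j\<bar> \<le> \<bar>f j\<bar>" by simp
  qed
  finally show "norm (\<beta> ^ t * (\<Sum>j\<in>UNIV. nstep P t i j * f j)) \<le> \<beta> ^ t * (\<Sum>j\<in>UNIV. \<bar>f j\<bar>)"
    using b by (simp only: real_norm_def abs_mult power_abs abs_of_nonneg) (rule mult_left_mono, auto)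
qed

lemma RR_bellman:
  assumes s: "stoch P" and b: "0 \<le> \<beta>" "\<beta> < 1"
  shows "RR \<beta> P f i = f i + \<beta> * (\<Sum>k\<in>UNIV. P i k * RR \<beta> P f k)"
proof -
  let ?a = "\<lambda>t. \<beta> ^ t * (\<Sum>j\<in>UNIV. nstep P t i j * f j)"
  have sa: "summable ?a" by (rule summable_term[OF s b])
  have "(\<Sum>t. ?a (Suc t)) = RR \<beta> P f i - ?a 0"
    unfolding RR_def by (rule suminf_split_head[OF sa])
  moreover have "?a 0 = f i"
    by (simp only: nstep.simps power_0 mult_1 md1 sum.delta' finite UNIV_I if_True)
  moreover have "(\<Sum>t. ?a (Suc t)) = \<beta> * (\<Sum>k\<in>UNIV. P i k * RR \<beta> P f k)"
  proof -
    have "\<And>t. ?a (Suc t) = \<beta> * (\<Sum>k\<in>UNIV. P i k * (\<beta> ^ t * (\<Sum>j\<in>UNIV. nstep P t k j * f j)))"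
    proof -
      fix t
      have "?a (Suc t) = \<beta> * (\<beta> ^ t * (\<Sum>j\<in>UNIV. \<Sum>k\<in>UNIV. P i k * (nstep P t k j * f j)))"
        by (simp only: nstep_Suc_left sum_distrib_right mult.assoc power_Suc)
      also have "\<dots> = \<beta> * (\<beta> ^ t * (\<Sum>k\<in>UNIV. \<Sum>j\<in>UNIV. P i k * (nstep P t k j * f j)))"
        by (subst sum.swap) (rule refl)
      also have "\<dots> = \<beta> * (\<Sum>k\<in>UNIV. P i k * (\<beta> ^ t * (\<Sum>j\<in>UNIV. nstep P t k j * f j)))"
        by (simp only: sum_distrib_left mult.left_commute)
      finally show "?a (Suc t) = \<beta> * (\<Sum>k\<in>UNIV. P i k * (\<beta> ^ t * (\<Sum>j\<in>UNIV. nstep P t k j * f j)))" .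
    qed
    then have "(\<Sum>t. ?a (Suc t)) = (\<Sum>t. \<beta> * (\<Sum>k\<in>UNIV. P i k * (\<beta> ^ t * (\<Sum>j\<in>UNIV. nstep P t k j * f j))))"
      by (simp only:)
    also have "\<dots> = \<beta> * (\<Sum>t. (\<Sum>k\<in>UNIV. P i k * (\<beta> ^ t * (\<Sum>j\<in>UNIV. nstep P t k j * f j))))"
      by (rule suminf_mult) (intro summable_sum summable_mult summable_term[OF s b])
    also have "(\<Sum>t. (\<Sum>k\<in>UNIV. P i k * (\<beta> ^ t * (\<Sum>j\<in>UNIV. nstep P t k j * f j))))
        = (\<Sum>k\<in>UNIV. (\<Sum>t. P i k * (\<beta> ^ t * (\<Sum>j\<in>UNIV. nstep P t k j * f j))))"
      by (rule suminf_sum) (intro summable_mult summable_term[OF s b])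
    also have "\<dots> = (\<Sum>k\<in>UNIV. P i k * RR \<beta> P f k)"
      unfolding RR_def by (intro sum.cong refl suminf_mult summable_term[OF s b])
    finally show ?thesis .
  qed
  ultimately show ?thesis by simp
qed

lemma contraction_zero:
  assumes s: "stoch P" and b: "0 \<le> \<beta>" "\<beta> < 1"
    and d: "\<And>i. d i = \<beta> * (\<Sum>k\<in>UNIV. P i k * d k)"
  shows "d i = 0"
proof -
  define M where "M = Max (range (\<lambda>i. \<bar>d i\<bar>))"
  have Mge: "\<And>j. \<bar>d j\<bar> \<le> M" unfolding M_def by (rule Max_ge) auto
  have "M \<in> range (\<lambda>i. \<bar>d i\<bar>)" unfolding M_def by (rule Max_in) auto
  then obtain i0 where i0: "M = \<bar>d i0\<bar>" by blast
  have "\<bar>d i0\<bar> = \<beta> * \<bar>\<Sum>k\<in>UNIV. P i0 k * d k\<bar>" using d[of i0] b by (simp add: abs_mult)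
  also have "\<bar>\<Sum>k\<in>UNIV. P i0 k * d k\<bar> \<le> (\<Sum>k\<in>UNIV. P i0 k * M)"
    by (rule order_trans[OF sum_abs], rule sum_mono)
       (use s Mge in \<open>auto simp: stoch_def abs_mult intro!: mult_left_mono\<close>)
  also have "(\<Sum>k\<in>UNIV. P i0 k * M) = M" using s by (simp add: stoch_def sum_distrib_right[symmetric])
  finally have "M \<le> \<beta> * M" using i0 b by (simp add: mult_left_mono)
  then have "M \<le> 0" using b by (smt (verit) mult_le_cancel_right1)
  then show ?thesis using Mge[of i] by simp
qed

lemma RR_unique:
  assumes s: "stoch P" and b: "0 \<le> \<beta>" "\<beta> < 1"
    and w: "\<And>i. w i = f i + \<beta> * (\<Sum>k\<in>UNIV. P i k * w k)"
  shows "w i = RR \<beta> P f i"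
proof -
  have "(\<lambda>i. w i - RR \<beta> P f i) i = 0"
  proof (rule contraction_zero[OF s b])
    fix i
    show "w i - RR \<beta> P f i = \<beta> * (\<Sum>k\<in>UNIV. P i k * (w k - RR \<beta> P f k))"
      using w[of i] RR_bellman[OF s b, of f i]
      by (simp add: right_diff_distrib sum_subtractf)
  qed
  then show ?thesis by simp
qed

lemma stoch_policy:
  assumes "stoch p0" "stoch p1" "\<And>j. 0 \<le> w j \<and> w j \<le> 1"
  shows "stoch (policy_trans p0 p1 w)"
  using assms unfolding stoch_def policy_trans_def
  by (auto simp: sum.distrib sum_distrib_left[symmetric] intro!: add_nonneg_nonneg mult_nonneg_nonneg)



theorem proposition6:
  fixes N01 N1 :: "'s::finite set"
    and p0 p1 :: "'s \<Rightarrow> 's \<Rightarrow> real"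
    and h0 h1 :: "'s \<Rightarrow> real"
    and \<beta> :: real
    and u :: "'s \<Rightarrow> real"
    and S :: "'s set"
    and i :: 's
  assumes partition: "N01 \<inter> N1 = {}" "N01 \<union> N1 = UNIV"
    and p0_nonneg: "\<And>j k. p0 j k \<ge> 0" and p0_stoch: "\<And>j. (\<Sum>k\<in>UNIV. p0 j k) = 1"
    and p1_nonneg: "\<And>j k. p1 j k \<ge> 0" and p1_stoch: "\<And>j. (\<Sum>k\<in>UNIV. p1 j k) = 1"
    and no_choice: "\<And>j. j \<in> N1 \<Longrightarrow> p1 j = p0 j \<and> h1 j = h0 j"
    and beta: "0 < \<beta>" "\<beta> < 1"
    and u_range: "\<And>j. 0 \<le> u j \<and> u j \<le> 1"
    and u_N1: "\<And>j. j \<in> N1 \<Longrightarrow> u j = 1"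
    and S_sub: "S \<subseteq> N01"
  shows "cost \<beta> p0 p1 h0 h1 (S_active N1 S) i
           + (\<Sum>j\<in>S. marg_cost \<beta> p0 p1 h0 h1 N1 S j * occ \<beta> p0 p1 u 0 i j)
         = cost \<beta> p0 p1 h0 h1 u i
           + (\<Sum>j\<in>N01 - S. marg_cost \<beta> p0 p1 h0 h1 N1 S j * occ \<beta> p0 p1 u 1 i j)"
  proof -
  have s0: "stoch p0" and s1: "stoch p1" using p0_nonneg p0_stoch p1_nonneg p1_stoch by (auto simp: stoch_def)
  have b: "0 \<le> \<beta>" "\<beta> < 1" using beta by auto
  define Pu where "Pu = policy_trans p0 p1 u"
  define PS where "PS = policy_trans p0 p1 (S_active N1 S)"
  have sPu: "stoch Pu" unfolding Pu_def by (rule stoch_policy[OF s0 s1 u_range])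
  have sPS: "stoch PS" unfolding PS_def by (rule stoch_policy[OF s0 s1]) (auto simp: S_active_def)
  define hw where "hw = (\<lambda>w j. act_prob w 0 j * h0 j + act_prob w 1 j * h1 j)"
  have cost_RR: "\<And>w k. cost \<beta> p0 p1 h0 h1 w k = RR \<beta> (policy_trans p0 p1 w) (hw w) k"
    unfolding cost_def RR_def hw_def ..
  define v where "v = cost \<beta> p0 p1 h0 h1 (S_active N1 S)"
  have vbell: "\<And>j. v j = hw (S_active N1 S) j + \<beta> * (\<Sum>k\<in>UNIV. PS j k * v k)"
    unfolding v_def cost_RR PS_def by (rule RR_bellman[OF sPS[unfolded PS_def] b])
  define c where "c = marg_cost \<beta> p0 p1 h0 h1 N1 S"
  define e where "e = (\<lambda>j. if j \<in> S then (1 - u j) * c j else if j \<in> N01 then - (u j * c j) else 0)"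
  have key: "v j + e j = hw u j + \<beta> * (\<Sum>k\<in>UNIV. Pu j k * v k)" for j
  proof -
    define A where "A = h0 j + \<beta> * (\<Sum>k\<in>UNIV. p0 j k * v k)"
    define B where "B = h1 j + \<beta> * (\<Sum>k\<in>UNIV. p1 j k * v k)"
    have cAB: "c j = A - B"
      unfolding c_def marg_cost_def A_def B_def v_def[symmetric]
      by (simp add: sum_subtractf left_diff_distrib right_diff_distrib algebra_simps)
    have Pv: "(\<Sum>k\<in>UNIV. Pu j k * v k) = u j * (\<Sum>k\<in>UNIV. p1 j k * v k) + (1 - u j) * (\<Sum>k\<in>UNIV. p0 j k * v k)"
      unfolding Pu_def policy_trans_def by (simp add: distrib_right sum.distrib sum_distrib_left mult.assoc)
    have rhs: "hw u j + \<beta> * (\<Sum>k\<in>UNIV. Pu j k * v k) = (1 - u j) * A + u j * B"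
      unfolding hw_def act_prob_def A_def B_def Pv by (simp add: algebra_simps)
    have vB: "v j = B" if "j \<in> S \<union> N1"
      using vbell[of j] that unfolding hw_def PS_def policy_trans_def act_prob_def S_active_def B_def
      by simp
    have vA: "v j = A" if "j \<notin> S \<union> N1"
      using vbell[of j] that unfolding hw_def PS_def policy_trans_def act_prob_def S_active_def A_def
      by simp
    have "v j + e j = (1 - u j) * A + u j * B"
    proof (cases "j \<in> S")
      case True
      then have "v j = B" "e j = (1 - u j) * (A - B)" using vB cAB unfolding e_def by auto
      then show ?thesis by (simp add: algebra_simps)
    next
      case nS: False
      show ?thesis
      proof (cases "j \<in> N01")
        case True
        then have "j \<notin> N1" using partition by auto
        then have "v j = A" "e j = - (u j * (A - B))" using vA cAB nS True unfolding e_def by auto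
        then show ?thesis by (simp add: algebra_simps)
      next
        case False
        then have "j \<in> N1" using partition by auto
        then have "v j = B" "e j = 0" "u j = 1" using vB nS False u_N1 unfolding e_def by auto
        then show ?thesis by simp
      qed
    qed
    then show ?thesis using rhs by simp
  qed
  have w_eq: "v i + RR \<beta> Pu e i = RR \<beta> Pu (hw u) i"
  proof (rule RR_unique[OF sPu b, where w="\<lambda>j. v j + RR \<beta> Pu e j"])
    fix j
    show "v j + RR \<beta> Pu e j = hw u j + \<beta> * (\<Sum>k\<in>UNIV. Pu j k * (v k + RR \<beta> Pu e k))"
      using key[of j] RR_bellman[OF sPu b, of e j]
      by (simp add: distrib_left sum.distrib algebra_simps)
  qed
  have occ_eq: "\<And>a j. occ \<beta> p0 p1 u a i j = (\<Sum>t. \<beta> ^ t * nstep Pu t i j * act_prob u a j)"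
    unfolding occ_def Pu_def ..
  have sm: "\<And>j. summable (\<lambda>t. \<beta> ^ t * nstep Pu t i j)"
  proof -
    fix j
    show "summable (\<lambda>t. \<beta> ^ t * nstep Pu t i j)"
      using summable_term[OF sPu b, of i "\<lambda>k. if k = j then 1 else 0"]
      by (simp add: md2)
  qed
  have "RR \<beta> Pu e i = (\<Sum>j\<in>UNIV. \<Sum>t. \<beta> ^ t * nstep Pu t i j * e j)"
    unfolding RR_def
    by (simp add: sum_distrib_left mult.assoc[symmetric], rule suminf_sum)
       (intro summable_mult2 sm)
  also have "\<dots> = (\<Sum>j\<in>UNIV. if j \<in> S then c j * occ \<beta> p0 p1 u 0 i j
                     else if j \<in> N01 then - (c j * occ \<beta> p0 p1 u 1 i j) else 0)"
  proof (rule sum.cong[OF refl])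
    fix j
    have "(\<Sum>t. \<beta> ^ t * nstep Pu t i j * e j) = (\<Sum>t. \<beta> ^ t * nstep Pu t i j) * e j"
      by (rule suminf_mult2[OF sm, symmetric])
    moreover have "\<And>a. occ \<beta> p0 p1 u a i j = (\<Sum>t. \<beta> ^ t * nstep Pu t i j) * act_prob u a j"
      unfolding occ_eq by (rule suminf_mult2[OF sm, symmetric])
    ultimately show "(\<Sum>t. \<beta> ^ t * nstep Pu t i j * e j) = (if j \<in> S then c j * occ \<beta> p0 p1 u 0 i j
                     else if j \<in> N01 then - (c j * occ \<beta> p0 p1 u 1 i j) else 0)"
      unfolding e_def act_prob_def by simp
  qed
  also have "\<dots> = (\<Sum>j\<in>S. c j * occ \<beta> p0 p1 u 0 i j) - (\<Sum>j\<in>N01 - S. c j * occ \<beta> p0 p1 u 1 i j)"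
  proof -
    let ?g = "\<lambda>j. if j \<in> S then c j * occ \<beta> p0 p1 u 0 i j
                     else if j \<in> N01 then - (c j * occ \<beta> p0 p1 u 1 i j) else 0"
    have "(\<Sum>j\<in>UNIV. ?g j) = (\<Sum>j\<in>N01. ?g j)"
      by (rule sum.mono_neutral_right) (use S_sub in auto)
    also have "\<dots> = (\<Sum>j\<in>S. ?g j) + (\<Sum>j\<in>N01 - S. ?g j)"
    proof -
      have sp: "N01 = S \<union> (N01 - S)" using S_sub by auto
      have "(\<Sum>j\<in>S \<union> (N01 - S). ?g j) = (\<Sum>j\<in>S. ?g j) + (\<Sum>j\<in>N01 - S. ?g j)"
        by (rule sum.union_disjoint) auto
      then show ?thesis using sp by simp
    qed
    also have "(\<Sum>j\<in>S. ?g j) = (\<Sum>j\<in>S. c j * occ \<beta> p0 p1 u 0 i j)" by (rule sum.cong) auto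
    also have "(\<Sum>j\<in>N01 - S. ?g j) = - (\<Sum>j\<in>N01 - S. c j * occ \<beta> p0 p1 u 1 i j)"
      by (simp add: sum_negf[symmetric])
    finally show ?thesis by simp
  qed
  finally have "RR \<beta> Pu e i = (\<Sum>j\<in>S. c j * occ \<beta> p0 p1 u 0 i j) - (\<Sum>j\<in>N01 - S. c j * occ \<beta> p0 p1 u 1 i j)" .
  moreover have "cost \<beta> p0 p1 h0 h1 u i = RR \<beta> Pu (hw u) i" unfolding cost_RR Pu_def ..
  ultimately show ?thesis using w_eq unfolding v_def c_def by simp
qed

end
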